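(* Let $\Gamma$ be a nonempty index set, and for each $\gamma\in\Gamma$ let $A_\gamma,B_\gamma$ be commutative groups. Put $A=\bigoplus_{\gamma}A_\gamma$ and $B=\prod_\gamma B_\gamma$, and regard each $f_\bullet=(f_\gamma)_\gamma\in\prod_\gamma B_\gamma^{A_\gamma}$ as the map $A\to B$, $(x_\gamma)_\gamma\mapsto(f_\gamma(x_\gamma))_\gamma$, so that $\prod_\gamma B_\gamma^{A_\gamma}\subseteq B^A$. Suppose that for every $\gamma\in\Gamma$, $\operatorname{Hom}(\bigoplus_{\lambda\ne\gamma}A_\lambda,B_\gamma)=\{0\}$. Then: (a) $\operatorname{fdeg}(f_\bullet)=\sup_\gamma\operatorname{fdeg}(f_\gamma)$ for all $f_\bullet=(f_\gamma)\in\prod_\gamma B_\gamma^{A_\gamma}$; (b) $\mathcal F_n(A,B)=\prod_\gamma\mathcal F_n(A_\gamma,B_\gamma)$ for every $n\in\mathbb N\cup\{-\infty\}$; (c) $\mathcal F(A,B)=\bigcup_{n<\infty}\prod_\gamma\mathcal F_n(A_\gamma,B_\gamma)\subseteq\prod_\gamma\mathcal F(A_\gamma,B_\gamma)$.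
   Context: For commutative groups $A,B$, $B^A$ denotes the commutative group (under pointwise addition) of all maps $A\to B$. For $a\in A$, the difference operator $\Delta_a:B^A\to B^A$ is $(\Delta_a f)(x)=f(x+a)-f(x)$. Let $\widetilde{\mathbb N}=\mathbb N\cup\{-\infty,\infty\}$ ($\mathbb N=\{0,1,2,\dots\}$), totally ordered with $-\infty$ least and $\infty$ greatest. The functional degree $\operatorname{fdeg}(f)\in\widetilde{\mathbb N}$ of $f\in B^A$ is: $-\infty$ if $f=0$; otherwise the least $n\in\mathbb N$ such that $\Delta_{a_1}\cdots\Delta_{a_{n+1}}f=0$ for all $a_1,\dots,a_{n+1}\in A$; and $\infty$ if no such $n$ exists. For $n\in\widetilde{\mathbb N}$, $\mathcal F_n(A,B)=\{f\in B^A:\operatorname{fdeg}(f)\le n\}$, and $\mathcal F(A,B)=\bigcup_{n<\infty}\mathcal F_n(A,B)$ (the maps of finite functional degree). *)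

theory Defs
  imports "HOL-Algebra.Product_Groups" "HOL-Library.Extended_Real"
begin

text \<open>Groups are HOL-Algebra (multiplicatively written) commutative groups.
  The set B^A of all maps A -> B is rendered as the extensional function space
  carrier G ->E carrier H.  Functional degrees take values in
  {-infinity} \<union> N \<union> {infinity}, viewed inside the complete linear order ereal.\<close>

definition maps :: "('a, 'c) monoid_scheme \<Rightarrow> ('b, 'd) monoid_scheme \<Rightarrow> ('a \<Rightarrow> 'b) set" where
  "maps G H = (carrier G \<rightarrow>\<^sub>E carrier H)"

definition diff_op :: "('a, 'c) monoid_scheme \<Rightarrow> ('b, 'd) monoid_scheme \<Rightarrow> 'a \<Rightarrow> ('a \<Rightarrow> 'b) \<Rightarrow> ('a \<Rightarrow> 'b)" where
  "diff_op G H a f = (\<lambda>x\<in>carrier G. f (x \<otimes>\<^bsub>G\<^esub> a) \<otimes>\<^bsub>H\<^esub> inv\<^bsub>H\<^esub> (f x))"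

definition diffs_vanish :: "('a, 'c) monoid_scheme \<Rightarrow> ('b, 'd) monoid_scheme \<Rightarrow> ('a \<Rightarrow> 'b) \<Rightarrow> nat \<Rightarrow> bool" where
  "diffs_vanish G H f n \<longleftrightarrow>
     (\<forall>as. length as = Suc n \<and> set as \<subseteq> carrier G \<longrightarrow>
        (\<forall>x\<in>carrier G. foldr (diff_op G H) as f x = \<one>\<^bsub>H\<^esub>))"

definition fdeg :: "('a, 'c) monoid_scheme \<Rightarrow> ('b, 'd) monoid_scheme \<Rightarrow> ('a \<Rightarrow> 'b) \<Rightarrow> ereal" where
  "fdeg G H f =
     (if \<forall>x\<in>carrier G. f x = \<one>\<^bsub>H\<^esub> then -\<infinity>
      else if \<exists>n. diffs_vanish G H f n then ereal (real (LEAST n. diffs_vanish G H f n))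
      else \<infinity>)"

definition Fdeg :: "('a, 'c) monoid_scheme \<Rightarrow> ('b, 'd) monoid_scheme \<Rightarrow> ereal \<Rightarrow> ('a \<Rightarrow> 'b) set" where
  "Fdeg G H n = {f \<in> maps G H. fdeg G H f \<le> n}"

definition Ffin :: "('a, 'c) monoid_scheme \<Rightarrow> ('b, 'd) monoid_scheme \<Rightarrow> ('a \<Rightarrow> 'b) set" where
  "Ffin G H = (\<Union>n::nat. Fdeg G H (ereal (real n)))"

definition prod_map :: "'i set \<Rightarrow> ('i \<Rightarrow> ('a, 'c) monoid_scheme) \<Rightarrow> ('i \<Rightarrow> 'a \<Rightarrow> 'b) \<Rightarrow> ('i \<Rightarrow> 'a) \<Rightarrow> ('i \<Rightarrow> 'b)" where
  "prod_map I A f = (\<lambda>x\<in>carrier (sum_group I A). \<lambda>i\<in>I. f i (x i))"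

end

theory Submission
  imports Defs
begin


lemma div_one_eq:
  assumes "group H" "a \<in> carrier H" "b \<in> carrier H" "a \<otimes>\<^bsub>H\<^esub> inv\<^bsub>H\<^esub> b = \<one>\<^bsub>H\<^esub>"
  shows "a = b"
proof -
  interpret group H by fact
  have "a = (a \<otimes>\<^bsub>H\<^esub> inv\<^bsub>H\<^esub> b) \<otimes>\<^bsub>H\<^esub> b" using assms(2,3) by (simp add: m_assoc)
  then show ?thesis using assms(3,4) by simp
qed

lemma diff_op_apply: "x \<in> carrier G \<Longrightarrow> diff_op G H a f x = f (x \<otimes>\<^bsub>G\<^esub> a) \<otimes>\<^bsub>H\<^esub> inv\<^bsub>H\<^esub> f x"
  by (simp add: diff_op_def)

lemma foldr_Cons_apply: "foldr F (a # as) f = F a (foldr F as f)"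
  by simp

lemma foldr_diff_closed:
  assumes "monoid G" "group H" "f \<in> carrier G \<rightarrow> carrier H" "set as \<subseteq> carrier G"
  shows "foldr (diff_op G H) as f \<in> carrier G \<rightarrow> carrier H"
  using assms(4)
proof (induction as)
  case Nil then show ?case using assms(3) by (simp only: foldr.simps id_apply)
next
  case (Cons a as)
  then have a: "a \<in> carrier G" and g: "foldr (diff_op G H) as f \<in> carrier G \<rightarrow> carrier H" by auto
  show ?case
  proof
    fix x assume x: "x \<in> carrier G"
    then have xa: "x \<otimes>\<^bsub>G\<^esub> a \<in> carrier G" by (rule monoid.m_closed[OF assms(1) _ a])
    have 1: "foldr (diff_op G H) as f (x \<otimes>\<^bsub>G\<^esub> a) \<in> carrier H" using g xa by blast
    have 2: "foldr (diff_op G H) as f x \<in> carrier H" using g x by blast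
    have "foldr (diff_op G H) (a # as) f x = foldr (diff_op G H) as f (x \<otimes>\<^bsub>G\<^esub> a) \<otimes>\<^bsub>H\<^esub> inv\<^bsub>H\<^esub> foldr (diff_op G H) as f x"
      by (simp only: foldr_Cons_apply diff_op_apply[OF x])
    also have "\<dots> \<in> carrier H"
      by (rule monoid.m_closed[OF group.is_monoid[OF assms(2)] 1 group.inv_closed[OF assms(2) 2]])
    finally show "foldr (diff_op G H) (a # as) f x \<in> carrier H" .
  qed
qed

lemma dv_Suc:
  assumes "monoid G" "group H" "diffs_vanish G H f n"
  shows "diffs_vanish G H f (Suc n)"
  unfolding diffs_vanish_def
proof (intro allI impI ballI)
  fix as x assume as: "length as = Suc (Suc n) \<and> set as \<subseteq> carrier G" and x: "x \<in> carrier G"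
  then obtain a bs where abs: "as = a # bs" by (cases as) auto
  with as have bs: "length bs = Suc n" "set bs \<subseteq> carrier G" and a: "a \<in> carrier G" by auto
  have xa: "x \<otimes>\<^bsub>G\<^esub> a \<in> carrier G" by (rule monoid.m_closed[OF assms(1) x a])
  have z: "foldr (diff_op G H) bs f y = \<one>\<^bsub>H\<^esub>" if "y \<in> carrier G" for y
    using assms(3) bs that unfolding diffs_vanish_def by blast
  have "foldr (diff_op G H) as f x = foldr (diff_op G H) bs f (x \<otimes>\<^bsub>G\<^esub> a) \<otimes>\<^bsub>H\<^esub> inv\<^bsub>H\<^esub> foldr (diff_op G H) bs f x"
    by (simp only: abs foldr_Cons_apply diff_op_apply[OF x])
  also have "\<dots> = \<one>\<^bsub>H\<^esub> \<otimes>\<^bsub>H\<^esub> inv\<^bsub>H\<^esub> \<one>\<^bsub>H\<^esub>" by (simp only: z[OF x] z[OF xa])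
  also have "\<dots> = \<one>\<^bsub>H\<^esub>" using assms(2) by (simp add: monoid.inv_one group.is_monoid monoid.l_one)
  finally show "foldr (diff_op G H) as f x = \<one>\<^bsub>H\<^esub>" .
qed

lemma dv_mono:
  assumes "monoid G" "group H" "diffs_vanish G H f n" "n \<le> m"
  shows "diffs_vanish G H f m"
  using assms(4,3) by (induction m rule: dec_induct) (auto intro: dv_Suc[OF assms(1,2)])

lemma zero_dv:
  assumes "monoid G" "group H" "\<forall>x\<in>carrier G. f x = \<one>\<^bsub>H\<^esub>"
  shows "diffs_vanish G H f 0"
  unfolding diffs_vanish_def
proof (intro allI impI ballI)
  fix as x assume as: "length as = Suc 0 \<and> set as \<subseteq> carrier G" and x: "x \<in> carrier G"
  then obtain a where abs: "as = [a]" by (cases as) auto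
  with as have a: "a \<in> carrier G" by auto
  have xa: "x \<otimes>\<^bsub>G\<^esub> a \<in> carrier G" by (rule monoid.m_closed[OF assms(1) x a])
  have "foldr (diff_op G H) as f x = f (x \<otimes>\<^bsub>G\<^esub> a) \<otimes>\<^bsub>H\<^esub> inv\<^bsub>H\<^esub> f x"
    by (simp only: abs foldr_Cons_apply foldr.simps(1) id_apply diff_op_apply[OF x])
  also have "\<dots> = \<one>\<^bsub>H\<^esub> \<otimes>\<^bsub>H\<^esub> inv\<^bsub>H\<^esub> \<one>\<^bsub>H\<^esub>" using assms(3) x xa by simp
  also have "\<dots> = \<one>\<^bsub>H\<^esub>" using assms(2) by (simp add: monoid.inv_one group.is_monoid monoid.l_one)
  finally show "foldr (diff_op G H) as f x = \<one>\<^bsub>H\<^esub>" .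
qed

lemma fdeg_cases: "fdeg G H f = -\<infinity> \<or> fdeg G H f = \<infinity> \<or> (\<exists>k::nat. fdeg G H f = ereal (real k))"
  unfolding fdeg_def by auto

lemma fdeg_bot: "fdeg G H f = -\<infinity> \<longleftrightarrow> (\<forall>x\<in>carrier G. f x = \<one>\<^bsub>H\<^esub>)"
  unfolding fdeg_def by auto

lemma fdeg_le_nat:
  assumes "monoid G" "group H"
  shows "fdeg G H f \<le> ereal (real m) \<longleftrightarrow> ((\<forall>x\<in>carrier G. f x = \<one>\<^bsub>H\<^esub>) \<or> diffs_vanish G H f m)"
proof (cases "\<forall>x\<in>carrier G. f x = \<one>\<^bsub>H\<^esub>")
  case True then show ?thesis by (simp add: fdeg_def)
next
  case False
  show ?thesis
  proof (cases "\<exists>n. diffs_vanish G H f n")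
    case True
    then have d: "fdeg G H f = ereal (real (LEAST n. diffs_vanish G H f n))"
      using False by (simp add: fdeg_def)
    have L: "diffs_vanish G H f (LEAST n. diffs_vanish G H f n)" using True by (rule LeastI_ex)
    show ?thesis
    proof
      assume "fdeg G H f \<le> ereal (real m)"
      then have "(LEAST n. diffs_vanish G H f n) \<le> m" using d by simp
      then show "(\<forall>x\<in>carrier G. f x = \<one>\<^bsub>H\<^esub>) \<or> diffs_vanish G H f m"
        using dv_mono[OF assms L] by blast
    next
      assume "(\<forall>x\<in>carrier G. f x = \<one>\<^bsub>H\<^esub>) \<or> diffs_vanish G H f m"
      then have "diffs_vanish G H f m" using False by blast
      then have "(LEAST n. diffs_vanish G H f n) \<le> m" by (rule Least_le)
      then show "fdeg G H f \<le> ereal (real m)" using d by simp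
    qed
  next
    case F2: False
    then show ?thesis using False by (simp add: fdeg_def)
  qed
qed



lemma (in comm_group) L3:
  assumes "a \<in> carrier G" "b \<in> carrier G" "c \<in> carrier G"
  shows "(a \<otimes> inv b) \<otimes> (b \<otimes> inv c) = a \<otimes> inv c"
proof -
  have "inv b \<otimes> (b \<otimes> inv c) = inv c" using assms by (simp add: m_assoc[symmetric])
  then show ?thesis using assms by (simp add: m_assoc)
qed

lemma (in comm_group) L1:
  assumes "p \<in> carrier G" "q \<in> carrier G" "r \<in> carrier G" "s \<in> carrier G"
    "p \<otimes> inv q = r \<otimes> inv s"
  shows "p \<otimes> inv r = q \<otimes> inv s"
proof -
  have "p \<otimes> inv r = (p \<otimes> inv q) \<otimes> (q \<otimes> inv r)" using L3[of p q r] assms by simp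
  also have "\<dots> = (r \<otimes> inv s) \<otimes> (q \<otimes> inv r)" using assms(5) by simp
  also have "\<dots> = (q \<otimes> inv r) \<otimes> (r \<otimes> inv s)" using assms by (simp add: m_comm)
  also have "\<dots> = q \<otimes> inv s" using L3[of q r s] assms by simp
  finally show ?thesis .
qed

lemma dv_diff:
  assumes "diffs_vanish G H f (Suc n)" "a \<in> carrier G"
  shows "diffs_vanish G H (diff_op G H a f) n"
  unfolding diffs_vanish_def
proof (intro allI impI ballI)
  fix as x assume as: "length as = Suc n \<and> set as \<subseteq> carrier G" and x: "x \<in> carrier G"
  have "foldr (diff_op G H) (as @ [a]) f x = \<one>\<^bsub>H\<^esub>"
    using assms(1)[unfolded diffs_vanish_def, rule_format, of "as @ [a]" x] assms(2) as x by simp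
  then show "foldr (diff_op G H) as (diff_op G H a f) x = \<one>\<^bsub>H\<^esub>" by simp
qed

lemma key:
  assumes cG: "comm_group G" and cH: "comm_group H" and K: "K \<subseteq> carrier G"
    and Kmul: "\<And>k1 k2. k1 \<in> K \<Longrightarrow> k2 \<in> K \<Longrightarrow> k1 \<otimes>\<^bsub>G\<^esub> k2 \<in> K"
    and hom0: "\<And>c. c \<in> K \<rightarrow> carrier H \<Longrightarrow>
        (\<And>k1 k2. k1 \<in> K \<Longrightarrow> k2 \<in> K \<Longrightarrow> c (k1 \<otimes>\<^bsub>G\<^esub> k2) = c k1 \<otimes>\<^bsub>H\<^esub> c k2) \<Longrightarrow> \<forall>k\<in>K. c k = \<one>\<^bsub>H\<^esub>"
  shows "f \<in> carrier G \<rightarrow> carrier H \<Longrightarrow> diffs_vanish G H f n \<Longrightarrow>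
     \<forall>k\<in>K. \<forall>x\<in>carrier G. f (x \<otimes>\<^bsub>G\<^esub> k) = f x"
proof (induction n arbitrary: f)
  interpret G: comm_group G by (rule cG)
  interpret H: comm_group H by (rule cH)
  case 0
  show ?case
  proof (intro ballI)
    fix k x assume k: "k \<in> K" and x: "x \<in> carrier G"
    have kG: "k \<in> carrier G" using k K by auto
    have "foldr (diff_op G H) [k] f x = \<one>\<^bsub>H\<^esub>"
      using 0(2)[unfolded diffs_vanish_def, rule_format, of "[k]" x] kG x by simp
    then have "f (x \<otimes>\<^bsub>G\<^esub> k) \<otimes>\<^bsub>H\<^esub> inv\<^bsub>H\<^esub> f x = \<one>\<^bsub>H\<^esub>" using x by (simp add: diff_op_def)
    then show "f (x \<otimes>\<^bsub>G\<^esub> k) = f x"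
      by (rule div_one_eq[OF H.is_group funcset_mem[OF 0(1) G.m_closed[OF x kG]] funcset_mem[OF 0(1) x]])
  qed
next
  interpret G: comm_group G by (rule cG)
  interpret H: comm_group H by (rule cH)
  case (Suc n)
  have fc: "f y \<in> carrier H" if "y \<in> carrier G" for y using Suc.prems(1) that by auto
  have IH': "diff_op G H a f (x \<otimes>\<^bsub>G\<^esub> k) = diff_op G H a f x"
    if a: "a \<in> carrier G" and k: "k \<in> K" and x: "x \<in> carrier G" for a k x
  proof -
    have c: "diff_op G H a f \<in> carrier G \<rightarrow> carrier H"
      using foldr_diff_closed[OF G.is_monoid H.is_group Suc.prems(1), of "[a]"] a by simp
    show ?thesis using Suc.IH[OF c dv_diff[OF Suc.prems(2) a]] k x by blast
  qed
  define D where "D k x = f (x \<otimes>\<^bsub>G\<^esub> k) \<otimes>\<^bsub>H\<^esub> inv\<^bsub>H\<^esub> f x" for k x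
  have Dc: "D k x \<in> carrier H" if "k \<in> K" "x \<in> carrier G" for k x
    using that K fc unfolding D_def by auto
  have Dconst: "D k (x \<otimes>\<^bsub>G\<^esub> a) = D k x" if k: "k \<in> K" and x: "x \<in> carrier G" and a: "a \<in> carrier G" for k x a
  proof -
    have kG: "k \<in> carrier G" using k K by auto
    have xk: "x \<otimes>\<^bsub>G\<^esub> k \<in> carrier G" using x kG by auto
    have "diff_op G H a f (x \<otimes>\<^bsub>G\<^esub> k) = diff_op G H a f x" using IH'[OF a k x] .
    then have e: "f (x \<otimes>\<^bsub>G\<^esub> k \<otimes>\<^bsub>G\<^esub> a) \<otimes>\<^bsub>H\<^esub> inv\<^bsub>H\<^esub> f (x \<otimes>\<^bsub>G\<^esub> k)
        = f (x \<otimes>\<^bsub>G\<^esub> a) \<otimes>\<^bsub>H\<^esub> inv\<^bsub>H\<^esub> f x"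
      using x xk by (simp add: diff_op_def)
    have sw: "x \<otimes>\<^bsub>G\<^esub> k \<otimes>\<^bsub>G\<^esub> a = x \<otimes>\<^bsub>G\<^esub> a \<otimes>\<^bsub>G\<^esub> k"
      using x kG a by (simp add: G.m_ac)
    have "f (x \<otimes>\<^bsub>G\<^esub> a \<otimes>\<^bsub>G\<^esub> k) \<otimes>\<^bsub>H\<^esub> inv\<^bsub>H\<^esub> f (x \<otimes>\<^bsub>G\<^esub> a)
        = f (x \<otimes>\<^bsub>G\<^esub> k) \<otimes>\<^bsub>H\<^esub> inv\<^bsub>H\<^esub> f x"
      by (rule H.L1) (use e sw x a kG xk fc in \<open>simp_all\<close>)
    then show ?thesis unfolding D_def .
  qed
  have Dconst1: "D k x = D k \<one>\<^bsub>G\<^esub>" if "k \<in> K" "x \<in> carrier G" for k x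
    using Dconst[of k "\<one>\<^bsub>G\<^esub>" x] that by simp
  define c where "c k = D k \<one>\<^bsub>G\<^esub>" for k
  have cc: "c \<in> K \<rightarrow> carrier H" unfolding c_def using Dc by auto
  have cm: "c (k1 \<otimes>\<^bsub>G\<^esub> k2) = c k1 \<otimes>\<^bsub>H\<^esub> c k2" if k1: "k1 \<in> K" and k2: "k2 \<in> K" for k1 k2
  proof -
    have k1G: "k1 \<in> carrier G" and k2G: "k2 \<in> carrier G" using k1 k2 K by auto
    have "c k1 = D k1 k2" unfolding c_def using Dconst1[OF k1 k2G] by simp
    also have "\<dots> = f (k2 \<otimes>\<^bsub>G\<^esub> k1) \<otimes>\<^bsub>H\<^esub> inv\<^bsub>H\<^esub> f k2" unfolding D_def ..
    finally have 1: "c k1 = f (k1 \<otimes>\<^bsub>G\<^esub> k2) \<otimes>\<^bsub>H\<^esub> inv\<^bsub>H\<^esub> f k2"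
      using k1G k2G by (simp add: G.m_comm)
    have 2: "c k2 = f k2 \<otimes>\<^bsub>H\<^esub> inv\<^bsub>H\<^esub> f \<one>\<^bsub>G\<^esub>" unfolding c_def D_def using k2G by simp
    have 3: "c (k1 \<otimes>\<^bsub>G\<^esub> k2) = f (k1 \<otimes>\<^bsub>G\<^esub> k2) \<otimes>\<^bsub>H\<^esub> inv\<^bsub>H\<^esub> f \<one>\<^bsub>G\<^esub>"
      unfolding c_def D_def using k1G k2G by simp
    show ?thesis using 1 2 3 H.L3 fc k1G k2G by simp
  qed
  have c1: "\<forall>k\<in>K. c k = \<one>\<^bsub>H\<^esub>" by (rule hom0[OF cc cm])
  show ?case
  proof (intro ballI)
    fix k x assume k: "k \<in> K" and x: "x \<in> carrier G"
    have kG: "k \<in> carrier G" using k K by auto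
    have "D k x = \<one>\<^bsub>H\<^esub>" using Dconst1[OF k x] c1 k unfolding c_def by simp
    then show "f (x \<otimes>\<^bsub>G\<^esub> k) = f x" unfolding D_def
      by (rule div_one_eq[OF H.is_group fc[OF G.m_closed[OF x kG]] fc[OF x]])
  qed
qed



definition sg :: "'i set \<Rightarrow> ('i \<Rightarrow> ('a, 'c) monoid_scheme) \<Rightarrow> 'i \<Rightarrow> 'a \<Rightarrow> ('i \<Rightarrow> 'a)" where
  "sg I A i a = (\<lambda>j\<in>I. if j = i then a else \<one>\<^bsub>A j\<^esub>)"

lemma sg_carrier:
  assumes gA: "\<And>i. i \<in> I \<Longrightarrow> group (A i)" and i: "i \<in> I" and a: "a \<in> carrier (A i)"
  shows "sg I A i a \<in> carrier (sum_group I A)"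
proof -
  have "{j \<in> I. sg I A i a j \<noteq> \<one>\<^bsub>A j\<^esub>} \<subseteq> {i}" by (auto simp: sg_def)
  then have "finite {j \<in> I. sg I A i a j \<noteq> \<one>\<^bsub>A j\<^esub>}" using finite_subset by blast
  moreover have "sg I A i a \<in> (\<Pi>\<^sub>E j\<in>I. carrier (A j))"
    using a gA by (auto simp: sg_def group.is_monoid monoid.one_closed)
  ultimately show ?thesis by (simp add: carrier_sum_group[OF gA])
qed

lemma sum_comp:
  assumes gA: "\<And>i. i \<in> I \<Longrightarrow> group (A i)" and x: "x \<in> carrier (sum_group I A)" and i: "i \<in> I"
  shows "x i \<in> carrier (A i)"
  using x i by (auto simp: carrier_sum_group[OF gA])

lemma prod_map_maps:
  assumes gA: "\<And>i. i \<in> I \<Longrightarrow> group (A i)" and f: "f \<in> (\<Pi>\<^sub>E i\<in>I. maps (A i) (B i))"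
  shows "prod_map I A f \<in> maps (sum_group I A) (product_group I B)"
  using f sum_comp[of I A, OF gA] unfolding maps_def prod_map_def by (auto simp: PiE_iff)

lemma foldr_prod:
  assumes gA: "\<And>i. i \<in> I \<Longrightarrow> group (A i)" and gB: "\<And>i. i \<in> I \<Longrightarrow> group (B i)"
    and f: "f \<in> (\<Pi>\<^sub>E i\<in>I. maps (A i) (B i))"
    and as: "set as \<subseteq> carrier (sum_group I A)"
  shows "x \<in> carrier (sum_group I A) \<Longrightarrow>
    foldr (diff_op (sum_group I A) (product_group I B)) as (prod_map I A f) x
     = (\<lambda>i\<in>I. foldr (diff_op (A i) (B i)) (map (\<lambda>a. a i) as) (f i) (x i))"
  using as
proof (induction as arbitrary: x)
  case Nil
  then show ?case by (simp add: prod_map_def)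
next
  case (Cons a as)
  let ?G = "sum_group I A" and ?P = "product_group I B"
  have a: "a \<in> carrier ?G" and as: "set as \<subseteq> carrier ?G" using Cons by auto
  have xa: "x \<otimes>\<^bsub>?G\<^esub> a \<in> carrier ?G" by (rule monoid.m_closed[OF group.is_monoid[OF sum_group[OF gA]] Cons.prems(1) a])
  have fi: "f i \<in> carrier (A i) \<rightarrow> carrier (B i)" if "i \<in> I" for i
    using f that by (auto simp: maps_def)
  have cl: "foldr (diff_op (A i) (B i)) (map (\<lambda>a. a i) as) (f i) \<in> carrier (A i) \<rightarrow> carrier (B i)" if i: "i \<in> I" for i
    by (rule foldr_diff_closed[OF group.is_monoid[OF gA[OF i]] gB[OF i] fi[OF i]]) (use as sum_comp[of I A, OF gA] i in auto)
  let ?h = "\<lambda>i. foldr (diff_op (A i) (B i)) (map (\<lambda>a. a i) as) (f i)"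
  have x: "x \<in> carrier ?G" by fact
  have xi: "x i \<in> carrier (A i)" if "i \<in> I" for i using sum_comp[of I A, OF gA x that] .
  have ai: "a i \<in> carrier (A i)" if "i \<in> I" for i using sum_comp[of I A, OF gA a that] .
  have inP: "(\<lambda>i\<in>I. ?h i (x i)) \<in> (\<Pi>\<^sub>E i\<in>I. carrier (B i))"
    using cl xi by auto
  have e1: "foldr (diff_op ?G ?P) as (prod_map I A f) (x \<otimes>\<^bsub>?G\<^esub> a) = (\<lambda>i\<in>I. ?h i ((x \<otimes>\<^bsub>?G\<^esub> a) i))"
    by (rule Cons.IH[OF xa as])
  have e2: "foldr (diff_op ?G ?P) as (prod_map I A f) x = (\<lambda>i\<in>I. ?h i (x i))"
    by (rule Cons.IH[OF x as])
  have inv: "inv\<^bsub>?P\<^esub> (\<lambda>i\<in>I. ?h i (x i)) = (\<lambda>i\<in>I. inv\<^bsub>B i\<^esub> (?h i (x i)))"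
  proof -
    have "inv\<^bsub>?P\<^esub> (\<lambda>i\<in>I. ?h i (x i)) = (\<lambda>i\<in>I. inv\<^bsub>B i\<^esub> ((\<lambda>i\<in>I. ?h i (x i)) i))"
      by (rule inv_product_group[of _ I B, OF inP gB])
    also have "\<dots> = (\<lambda>i\<in>I. inv\<^bsub>B i\<^esub> (?h i (x i)))" by (intro restrict_ext) simp
    finally show ?thesis .
  qed
  have "foldr (diff_op ?G ?P) (a # as) (prod_map I A f) x
      = foldr (diff_op ?G ?P) as (prod_map I A f) (x \<otimes>\<^bsub>?G\<^esub> a) \<otimes>\<^bsub>?P\<^esub>
        inv\<^bsub>?P\<^esub> (foldr (diff_op ?G ?P) as (prod_map I A f) x)"
    by (simp only: foldr_Cons_apply diff_op_apply[OF x])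
  also have "\<dots> = (\<lambda>i\<in>I. ?h i ((x \<otimes>\<^bsub>?G\<^esub> a) i)) \<otimes>\<^bsub>?P\<^esub> (\<lambda>i\<in>I. inv\<^bsub>B i\<^esub> (?h i (x i)))"
    by (simp only: e1 e2 inv)
  also have "\<dots> = (\<lambda>i\<in>I. ?h i (x i \<otimes>\<^bsub>A i\<^esub> a i) \<otimes>\<^bsub>B i\<^esub> inv\<^bsub>B i\<^esub> (?h i (x i)))"
    unfolding mult_product_group by (intro restrict_ext) simp
  also have "\<dots> = (\<lambda>i\<in>I. foldr (diff_op (A i) (B i)) (map (\<lambda>a. a i) (a # as)) (f i) (x i))"
  proof (intro restrict_ext)
    fix i assume i: "i \<in> I"
    show "?h i (x i \<otimes>\<^bsub>A i\<^esub> a i) \<otimes>\<^bsub>B i\<^esub> inv\<^bsub>B i\<^esub> (?h i (x i))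
      = foldr (diff_op (A i) (B i)) (map (\<lambda>a. a i) (a # as)) (f i) (x i)"
      by (simp only: list.map foldr_Cons_apply diff_op_apply[OF xi[OF i]])
  qed
  finally show ?case .
qed



lemma sg_comp: "i \<in> I \<Longrightarrow> sg I A i a i = a" by (simp add: sg_def)

lemma dv_prod:
  assumes gA: "\<And>i. i \<in> I \<Longrightarrow> group (A i)" and gB: "\<And>i. i \<in> I \<Longrightarrow> group (B i)"
    and f: "f \<in> (\<Pi>\<^sub>E i\<in>I. maps (A i) (B i))"
  shows "diffs_vanish (sum_group I A) (product_group I B) (prod_map I A f) n
     \<longleftrightarrow> (\<forall>i\<in>I. diffs_vanish (A i) (B i) (f i) n)"
proof
  assume H: "diffs_vanish (sum_group I A) (product_group I B) (prod_map I A f) n"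
  show "\<forall>i\<in>I. diffs_vanish (A i) (B i) (f i) n"
    unfolding diffs_vanish_def
  proof (intro ballI allI impI)
    fix i bs y assume i: "i \<in> I" and bs: "length bs = Suc n \<and> set bs \<subseteq> carrier (A i)" and y: "y \<in> carrier (A i)"
    let ?as = "map (sg I A i) bs"
    have as: "length ?as = Suc n" "set ?as \<subseteq> carrier (sum_group I A)"
      using bs sg_carrier[of I A, OF gA i] by auto
    have x: "sg I A i y \<in> carrier (sum_group I A)" using sg_carrier[of I A, OF gA i y] .
    have "foldr (diff_op (sum_group I A) (product_group I B)) ?as (prod_map I A f) (sg I A i y)
        = \<one>\<^bsub>product_group I B\<^esub>" using H as x unfolding diffs_vanish_def by blast
    then have "foldr (diff_op (sum_group I A) (product_group I B)) ?as (prod_map I A f) (sg I A i y) i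
        = \<one>\<^bsub>B i\<^esub>" using i by simp
    moreover have "map (\<lambda>a. a i) ?as = bs" using i by (simp add: sg_comp comp_def)
    ultimately show "foldr (diff_op (A i) (B i)) bs (f i) y = \<one>\<^bsub>B i\<^esub>"
      using foldr_prod[OF gA gB f as(2) x] i by (simp add: sg_comp)
  qed
next
  assume H: "\<forall>i\<in>I. diffs_vanish (A i) (B i) (f i) n"
  show "diffs_vanish (sum_group I A) (product_group I B) (prod_map I A f) n"
    unfolding diffs_vanish_def
  proof (intro ballI allI impI)
    fix as x assume as: "length as = Suc n \<and> set as \<subseteq> carrier (sum_group I A)"
      and x: "x \<in> carrier (sum_group I A)"
    have "foldr (diff_op (A i) (B i)) (map (\<lambda>a. a i) as) (f i) (x i) = \<one>\<^bsub>B i\<^esub>" if i: "i \<in> I" for i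
    proof -
      have "set (map (\<lambda>a. a i) as) \<subseteq> carrier (A i)" using as sum_comp[of I A, OF gA _ i] by auto
      then show ?thesis using H i as sum_comp[of I A, OF gA x i] unfolding diffs_vanish_def by simp
    qed
    then show "foldr (diff_op (sum_group I A) (product_group I B)) as (prod_map I A f) x
        = \<one>\<^bsub>product_group I B\<^esub>"
      using foldr_prod[OF gA gB f _ x] as by (auto intro: restrict_ext)
  qed
qed

lemma zero_prod:
  assumes gA: "\<And>i. i \<in> I \<Longrightarrow> group (A i)"
  shows "(\<forall>x\<in>carrier (sum_group I A). prod_map I A f x = \<one>\<^bsub>product_group I B\<^esub>)
     \<longleftrightarrow> (\<forall>i\<in>I. \<forall>y\<in>carrier (A i). f i y = \<one>\<^bsub>B i\<^esub>)"
proof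
  assume H: "\<forall>x\<in>carrier (sum_group I A). prod_map I A f x = \<one>\<^bsub>product_group I B\<^esub>"
  show "\<forall>i\<in>I. \<forall>y\<in>carrier (A i). f i y = \<one>\<^bsub>B i\<^esub>"
  proof (intro ballI)
    fix i y assume i: "i \<in> I" and y: "y \<in> carrier (A i)"
    have x: "sg I A i y \<in> carrier (sum_group I A)" using sg_carrier[of I A, OF gA i y] .
    have "prod_map I A f (sg I A i y) i = \<one>\<^bsub>B i\<^esub>" using H x i by simp
    then show "f i y = \<one>\<^bsub>B i\<^esub>" using x i by (simp add: prod_map_def sg_comp)
  qed
next
  assume H: "\<forall>i\<in>I. \<forall>y\<in>carrier (A i). f i y = \<one>\<^bsub>B i\<^esub>"
  show "\<forall>x\<in>carrier (sum_group I A). prod_map I A f x = \<one>\<^bsub>product_group I B\<^esub>"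
    using H sum_comp[of I A, OF gA] by (auto simp: prod_map_def intro: restrict_ext)
qed



lemma fdeg_prod:
  assumes gA: "\<And>i. i \<in> I \<Longrightarrow> group (A i)" and gB: "\<And>i. i \<in> I \<Longrightarrow> group (B i)"
    and f: "f \<in> (\<Pi>\<^sub>E i\<in>I. maps (A i) (B i))"
  shows "fdeg (sum_group I A) (product_group I B) (prod_map I A f) = (SUP i\<in>I. fdeg (A i) (B i) (f i))"
proof -
  let ?G = "sum_group I A" and ?P = "product_group I B" and ?F = "prod_map I A f"
  let ?d = "fdeg ?G ?P ?F" and ?e = "\<lambda>i. fdeg (A i) (B i) (f i)"
  have mG: "monoid ?G" using gA by (simp add: group.is_monoid)
  have gP: "group ?P" using gB by simp
  have bot: "?d = -\<infinity> \<longleftrightarrow> (\<forall>i\<in>I. ?e i = -\<infinity>)"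
  proof -
    have z: "(\<forall>x\<in>carrier ?G. ?F x = \<one>\<^bsub>?P\<^esub>) \<longleftrightarrow> (\<forall>i\<in>I. \<forall>y\<in>carrier (A i). f i y = \<one>\<^bsub>B i\<^esub>)"
      by (rule zero_prod[OF gA])
    show ?thesis unfolding fdeg_bot z ..
  qed
  have le: "?d \<le> ereal (real m) \<longleftrightarrow> (\<forall>i\<in>I. ?e i \<le> ereal (real m))" for m
  proof -
    have z: "(\<forall>x\<in>carrier ?G. ?F x = \<one>\<^bsub>?P\<^esub>) \<longleftrightarrow> (\<forall>i\<in>I. \<forall>y\<in>carrier (A i). f i y = \<one>\<^bsub>B i\<^esub>)"
      by (rule zero_prod[OF gA])
    have v: "diffs_vanish ?G ?P ?F m \<longleftrightarrow> (\<forall>i\<in>I. diffs_vanish (A i) (B i) (f i) m)"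
      by (rule dv_prod[OF gA gB f])
    have "?d \<le> ereal (real m) \<longleftrightarrow> (\<forall>x\<in>carrier ?G. ?F x = \<one>\<^bsub>?P\<^esub>) \<or> diffs_vanish ?G ?P ?F m"
      by (rule fdeg_le_nat[OF mG gP])
    also have "\<dots> \<longleftrightarrow> (\<forall>i\<in>I. \<forall>y\<in>carrier (A i). f i y = \<one>\<^bsub>B i\<^esub>) \<or> (\<forall>i\<in>I. diffs_vanish (A i) (B i) (f i) m)"
      by (simp only: z v)
    also have "\<dots> \<longleftrightarrow> (\<forall>i\<in>I. (\<forall>y\<in>carrier (A i). f i y = \<one>\<^bsub>B i\<^esub>) \<or> diffs_vanish (A i) (B i) (f i) m)"
    proof
      assume "(\<forall>i\<in>I. \<forall>y\<in>carrier (A i). f i y = \<one>\<^bsub>B i\<^esub>) \<or> (\<forall>i\<in>I. diffs_vanish (A i) (B i) (f i) m)"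
      then show "\<forall>i\<in>I. (\<forall>y\<in>carrier (A i). f i y = \<one>\<^bsub>B i\<^esub>) \<or> diffs_vanish (A i) (B i) (f i) m" by blast
    next
      assume R: "\<forall>i\<in>I. (\<forall>y\<in>carrier (A i). f i y = \<one>\<^bsub>B i\<^esub>) \<or> diffs_vanish (A i) (B i) (f i) m"
      have "diffs_vanish (A i) (B i) (f i) m" if i: "i \<in> I" for i
      proof (cases "\<forall>y\<in>carrier (A i). f i y = \<one>\<^bsub>B i\<^esub>")
        case True
        then have "diffs_vanish (A i) (B i) (f i) 0" by (rule zero_dv[OF group.is_monoid[OF gA[OF i]] gB[OF i]])
        then show ?thesis by (rule dv_mono[OF group.is_monoid[OF gA[OF i]] gB[OF i]]) simp
      next
        case False then show ?thesis using R i by blast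
      qed
      then show "(\<forall>i\<in>I. \<forall>y\<in>carrier (A i). f i y = \<one>\<^bsub>B i\<^esub>) \<or> (\<forall>i\<in>I. diffs_vanish (A i) (B i) (f i) m)" by blast
    qed
    also have "\<dots> \<longleftrightarrow> (\<forall>i\<in>I. ?e i \<le> ereal (real m))"
    proof (rule ball_cong[OF refl])
      fix i assume i: "i \<in> I"
      show "((\<forall>y\<in>carrier (A i). f i y = \<one>\<^bsub>B i\<^esub>) \<or> diffs_vanish (A i) (B i) (f i) m) \<longleftrightarrow> ?e i \<le> ereal (real m)"
        by (rule fdeg_le_nat[OF group.is_monoid[OF gA[OF i]] gB[OF i], symmetric])
    qed
    finally show ?thesis .
  qed
  show ?thesis
  proof (rule antisym)
    show "(SUP i\<in>I. ?e i) \<le> ?d"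
    proof (rule SUP_least)
      fix i assume i: "i \<in> I"
      show "?e i \<le> ?d"
        using fdeg_cases[of ?G ?P ?F]
      proof (elim disjE exE)
        assume "?d = -\<infinity>" then show ?thesis using bot i by simp
      next
        assume "?d = \<infinity>" then show ?thesis by simp
      next
        fix k assume "?d = ereal (real k)" then show ?thesis using le[of k] i by simp
      qed
    qed
  next
    show "?d \<le> (SUP i\<in>I. ?e i)"
    proof (cases "\<forall>i\<in>I. ?e i = -\<infinity>")
      case True then show ?thesis using bot by simp
    next
      case False
      then obtain i0 where i0: "i0 \<in> I" "?e i0 \<noteq> -\<infinity>" by blast
      have ub: "?e i \<le> (SUP i\<in>I. ?e i)" if "i \<in> I" for i using that by (rule SUP_upper)
      show ?thesis
      proof (cases "(SUP i\<in>I. ?e i) = \<infinity>")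
        case True then show ?thesis by simp
      next
        case NI: False
        have "(SUP i\<in>I. ?e i) \<noteq> -\<infinity>" using ub[OF i0(1)] i0(2) by auto
        with NI obtain r where r: "(SUP i\<in>I. ?e i) = ereal r" by (cases "(SUP i\<in>I. ?e i)") auto
        have nat_le: "?e i \<le> ereal (real (nat \<lfloor>r\<rfloor>))" if i: "i \<in> I" for i
          using fdeg_cases[of "A i" "B i" "f i"]
        proof (elim disjE exE)
          assume "?e i = -\<infinity>" then show ?thesis by simp
        next
          assume "?e i = \<infinity>" then show ?thesis using ub[OF i] r by simp
        next
          fix k assume k: "?e i = ereal (real k)"
          then have "real k \<le> r" using ub[OF i] r by simp
          then have "k \<le> nat \<lfloor>r\<rfloor>" by linarith
          then show ?thesis using k by simp
        qed
        have r0: "0 \<le> r"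
          using fdeg_cases[of "A i0" "B i0" "f i0"] i0 ub[OF i0(1)] r by auto
        have "?d \<le> ereal (real (nat \<lfloor>r\<rfloor>))" using le nat_le by blast
        also have "\<dots> \<le> ereal r" using r0 by simp
        finally show ?thesis using r by simp
      qed
    qed
  qed
qed



lemma comm_sum_group:
  assumes cA: "\<And>i. i \<in> I \<Longrightarrow> comm_group (A i)"
  shows "comm_group (sum_group I A)"
proof -
  have gA: "\<And>i. i \<in> I \<Longrightarrow> group (A i)" using cA comm_group.axioms(2) by blast
  show ?thesis
  proof (rule group.group_comm_groupI)
    show "group (sum_group I A)" using gA by simp
    fix x y assume x: "x \<in> carrier (sum_group I A)" and y: "y \<in> carrier (sum_group I A)"
    show "x \<otimes>\<^bsub>sum_group I A\<^esub> y = y \<otimes>\<^bsub>sum_group I A\<^esub> x"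
      unfolding mult_sum_group
    proof (intro restrict_ext)
      fix i assume i: "i \<in> I"
      show "x i \<otimes>\<^bsub>A i\<^esub> y i = y i \<otimes>\<^bsub>A i\<^esub> x i"
        by (rule comm_monoid.m_comm[OF comm_group.axioms(1)[OF cA[OF i]] sum_comp[of I A, OF gA x i] sum_comp[of I A, OF gA y i]])
    qed
  qed
qed

lemma foldr_comp:
  assumes gA: "\<And>i. i \<in> I \<Longrightarrow> group (A i)" and gB: "\<And>i. i \<in> I \<Longrightarrow> group (B i)"
    and F: "F \<in> maps (sum_group I A) (product_group I B)" and g: "g \<in> I"
    and as: "set as \<subseteq> carrier (sum_group I A)"
  shows "x \<in> carrier (sum_group I A) \<Longrightarrow>
    foldr (diff_op (sum_group I A) (B g)) as (\<lambda>x\<in>carrier (sum_group I A). F x g) x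
     = foldr (diff_op (sum_group I A) (product_group I B)) as F x g"
  using as
proof (induction as arbitrary: x)
  case Nil then show ?case by simp
next
  case (Cons a as)
  let ?G = "sum_group I A" and ?P = "product_group I B"
  let ?g0 = "foldr (diff_op ?G ?P) as F" and ?h = "foldr (diff_op ?G (B g)) as (\<lambda>x\<in>carrier ?G. F x g)"
  have x: "x \<in> carrier ?G" by fact
  have a: "a \<in> carrier ?G" and as: "set as \<subseteq> carrier ?G" using Cons by auto
  have mG: "monoid ?G" using gA by (simp add: group.is_monoid)
  have xa: "x \<otimes>\<^bsub>?G\<^esub> a \<in> carrier ?G" by (rule monoid.m_closed[OF mG Cons.prems(1) a])
  have cl: "?g0 \<in> carrier ?G \<rightarrow> carrier ?P"
    by (rule foldr_diff_closed[OF mG]) (use gB F as in \<open>auto simp: maps_def\<close>)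
  then have inP: "?g0 x \<in> (\<Pi>\<^sub>E i\<in>I. carrier (B i))" using x by auto
  have "foldr (diff_op ?G (B g)) (a # as) (\<lambda>x\<in>carrier ?G. F x g) x = ?h (x \<otimes>\<^bsub>?G\<^esub> a) \<otimes>\<^bsub>B g\<^esub> inv\<^bsub>B g\<^esub> ?h x"
    by (simp only: foldr_Cons_apply diff_op_apply[OF x])
  also have "\<dots> = ?g0 (x \<otimes>\<^bsub>?G\<^esub> a) g \<otimes>\<^bsub>B g\<^esub> inv\<^bsub>B g\<^esub> (?g0 x g)"
    by (simp only: Cons.IH[OF xa as] Cons.IH[OF x as])
  also have "\<dots> = (?g0 (x \<otimes>\<^bsub>?G\<^esub> a) \<otimes>\<^bsub>?P\<^esub> inv\<^bsub>?P\<^esub> (?g0 x)) g"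
    using g by (simp add: inv_product_group[of _ I B, OF inP gB])
  also have "\<dots> = foldr (diff_op ?G ?P) (a # as) F x g"
    by (simp only: foldr_Cons_apply diff_op_apply[OF x])
  finally show ?case .
qed

lemma decompose:
  assumes cA: "\<And>i. i \<in> I \<Longrightarrow> comm_group (A i)" and cB: "\<And>i. i \<in> I \<Longrightarrow> comm_group (B i)"
    and hyp: "\<And>\<gamma> h. \<gamma> \<in> I \<Longrightarrow> h \<in> hom (sum_group (I - {\<gamma>}) A) (B \<gamma>) \<Longrightarrow>
           (\<forall>x\<in>carrier (sum_group (I - {\<gamma>}) A). h x = \<one>\<^bsub>B \<gamma>\<^esub>)"
    and F: "F \<in> maps (sum_group I A) (product_group I B)"
    and dv: "diffs_vanish (sum_group I A) (product_group I B) F m"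
  shows "\<exists>f \<in> (\<Pi>\<^sub>E i\<in>I. maps (A i) (B i)). F = prod_map I A f"
proof -
  let ?G = "sum_group I A" and ?P = "product_group I B"
  have gA: "\<And>i. i \<in> I \<Longrightarrow> group (A i)" using cA comm_group.axioms(2) by blast
  have gB: "\<And>i. i \<in> I \<Longrightarrow> group (B i)" using cB comm_group.axioms(2) by blast
  have cG: "comm_group ?G" by (rule comm_sum_group[OF cA])
  have mG: "monoid ?G" using gA by (simp add: group.is_monoid)
  have A1: "\<And>i. i \<in> I \<Longrightarrow> \<one>\<^bsub>A i\<^esub> \<in> carrier (A i)"
    using gA by (simp add: group.is_monoid monoid.one_closed)
  have Al: "\<And>i z. i \<in> I \<Longrightarrow> z \<in> carrier (A i) \<Longrightarrow> \<one>\<^bsub>A i\<^esub> \<otimes>\<^bsub>A i\<^esub> z = z"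
    using gA by (simp add: group.is_monoid monoid.l_one)
  have Ar: "\<And>i z. i \<in> I \<Longrightarrow> z \<in> carrier (A i) \<Longrightarrow> z \<otimes>\<^bsub>A i\<^esub> \<one>\<^bsub>A i\<^esub> = z"
    using gA by (simp add: group.is_monoid monoid.r_one)
  have CS: "carrier ?G = {x \<in> \<Pi>\<^sub>E i\<in>I. carrier (A i). finite {i \<in> I. x i \<noteq> \<one>\<^bsub>A i\<^esub>}}"
    by (rule carrier_sum_group[of I A, OF gA])
  have Fx: "F x \<in> (\<Pi>\<^sub>E i\<in>I. carrier (B i))" if "x \<in> carrier ?G" for x
    using F that by (auto simp: maps_def)
  have invF: "F (x \<otimes>\<^bsub>?G\<^esub> k) g = F x g"
    if g: "g \<in> I" and x: "x \<in> carrier ?G" and k: "k \<in> carrier ?G" "k g = \<one>\<^bsub>A g\<^esub>" for g x k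
  proof -
    let ?K = "{x \<in> carrier ?G. x g = \<one>\<^bsub>A g\<^esub>}"
    let ?Fg = "\<lambda>x\<in>carrier ?G. F x g"
    have Fgc: "?Fg \<in> carrier ?G \<rightarrow> carrier (B g)" using Fx g by auto
    have dvg: "diffs_vanish ?G (B g) ?Fg m"
      unfolding diffs_vanish_def
    proof (intro allI impI ballI)
      fix as y assume as: "length as = Suc m \<and> set as \<subseteq> carrier ?G" and y: "y \<in> carrier ?G"
      have "foldr (diff_op ?G ?P) as F y = \<one>\<^bsub>?P\<^esub>"
        using dv as y unfolding diffs_vanish_def by blast
      then show "foldr (diff_op ?G (B g)) as ?Fg y = \<one>\<^bsub>B g\<^esub>"
        using foldr_comp[OF gA gB F g _ y] as g by simp
    qed
    have Kmul: "k1 \<otimes>\<^bsub>?G\<^esub> k2 \<in> ?K" if k1: "k1 \<in> ?K" and k2: "k2 \<in> ?K" for k1 k2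
    proof -
      have "k1 \<otimes>\<^bsub>?G\<^esub> k2 \<in> carrier ?G" using k1 k2 monoid.m_closed[OF mG] by blast
      moreover have "(k1 \<otimes>\<^bsub>?G\<^esub> k2) g = \<one>\<^bsub>A g\<^esub>"
        using k1 k2 g A1 Al by simp
      ultimately show ?thesis by blast
    qed
    define ext where "ext y = (\<lambda>i\<in>I. if i = g then \<one>\<^bsub>A i\<^esub> else y i)" for y :: "'a \<Rightarrow> 'b"
    have gA': "\<And>i. i \<in> I - {g} \<Longrightarrow> group (A i)" using gA by blast
    have CS': "carrier (sum_group (I - {g}) A) = {x \<in> \<Pi>\<^sub>E i\<in>I - {g}. carrier (A i). finite {i \<in> I - {g}. x i \<noteq> \<one>\<^bsub>A i\<^esub>}}"
      by (rule carrier_sum_group[of "I - {g}" A, OF gA'])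
    have ext_in: "ext y \<in> ?K" if y: "y \<in> carrier (sum_group (I - {g}) A)" for y
    proof -
      have y1: "y \<in> (\<Pi>\<^sub>E i\<in>I - {g}. carrier (A i))" and y2: "finite {i \<in> I - {g}. y i \<noteq> \<one>\<^bsub>A i\<^esub>}"
        using y unfolding CS' by blast+
      have "{i \<in> I. ext y i \<noteq> \<one>\<^bsub>A i\<^esub>} \<subseteq> {i \<in> I - {g}. y i \<noteq> \<one>\<^bsub>A i\<^esub>}" by (auto simp: ext_def)
      then have "finite {i \<in> I. ext y i \<noteq> \<one>\<^bsub>A i\<^esub>}" using y2 finite_subset by blast
      moreover have "ext y \<in> (\<Pi>\<^sub>E i\<in>I. carrier (A i))"
      proof -
        have "ext y i \<in> carrier (A i)" if i: "i \<in> I" for i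
        proof (cases "i = g")
          case True then show ?thesis using i A1 by (simp add: ext_def)
        next
          case False then show ?thesis using i y1 by (auto simp: ext_def)
        qed
        then show ?thesis by (auto simp: ext_def)
      qed
      moreover have "ext y g = \<one>\<^bsub>A g\<^esub>" using g by (simp add: ext_def)
      ultimately show ?thesis unfolding CS by blast
    qed
    have hom0: "\<forall>k\<in>?K. c k = \<one>\<^bsub>B g\<^esub>"
      if cc: "c \<in> ?K \<rightarrow> carrier (B g)"
        and cm: "\<And>k1 k2. k1 \<in> ?K \<Longrightarrow> k2 \<in> ?K \<Longrightarrow> c (k1 \<otimes>\<^bsub>?G\<^esub> k2) = c k1 \<otimes>\<^bsub>B g\<^esub> c k2" for c
    proof -
      have ext_mult: "ext (y \<otimes>\<^bsub>sum_group (I - {g}) A\<^esub> y') = ext y \<otimes>\<^bsub>?G\<^esub> ext y'"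
        if "y \<in> carrier (sum_group (I - {g}) A)" "y' \<in> carrier (sum_group (I - {g}) A)" for y y'
        unfolding mult_sum_group ext_def
      proof (intro restrict_ext)
        fix i assume i: "i \<in> I"
        show "(if i = g then \<one>\<^bsub>A i\<^esub> else (\<lambda>i\<in>I - {g}. y i \<otimes>\<^bsub>A i\<^esub> y' i) i)
          = (\<lambda>i\<in>I. if i = g then \<one>\<^bsub>A i\<^esub> else y i) i \<otimes>\<^bsub>A i\<^esub> (\<lambda>i\<in>I. if i = g then \<one>\<^bsub>A i\<^esub> else y' i) i"
          using i g A1[OF g] Al[OF g A1[OF g]] by (cases "i = g") simp_all
      qed
      have "(\<lambda>y. c (ext y)) \<in> hom (sum_group (I - {g}) A) (B g)"
        unfolding hom_def
      proof (intro CollectI conjI ballI)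
        show "(\<lambda>y. c (ext y)) \<in> carrier (sum_group (I - {g}) A) \<rightarrow> carrier (B g)"
          using cc ext_in by blast
        fix y y' assume y: "y \<in> carrier (sum_group (I - {g}) A)" and y': "y' \<in> carrier (sum_group (I - {g}) A)"
        show "c (ext (y \<otimes>\<^bsub>sum_group (I - {g}) A\<^esub> y')) = c (ext y) \<otimes>\<^bsub>B g\<^esub> c (ext y')"
          unfolding ext_mult[OF y y'] by (rule cm[OF ext_in[OF y] ext_in[OF y']])
      qed
      then have h1: "\<forall>y\<in>carrier (sum_group (I - {g}) A). c (ext y) = \<one>\<^bsub>B g\<^esub>" by (rule hyp[OF g])
      show ?thesis
      proof
        fix k assume k: "k \<in> ?K"
        have kk1: "k \<in> (\<Pi>\<^sub>E i\<in>I. carrier (A i))" and kk2: "finite {i \<in> I. k i \<noteq> \<one>\<^bsub>A i\<^esub>}"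
          using k unfolding CS by blast+
        have kr: "restrict k (I - {g}) \<in> carrier (sum_group (I - {g}) A)"
        proof -
          have "{i \<in> I - {g}. restrict k (I - {g}) i \<noteq> \<one>\<^bsub>A i\<^esub>} \<subseteq> {i \<in> I. k i \<noteq> \<one>\<^bsub>A i\<^esub>}" by auto
          then have "finite {i \<in> I - {g}. restrict k (I - {g}) i \<noteq> \<one>\<^bsub>A i\<^esub>}" using kk2 finite_subset by blast
          moreover have "restrict k (I - {g}) \<in> (\<Pi>\<^sub>E i\<in>I - {g}. carrier (A i))"
            using kk1 by (auto simp: PiE_iff)
          ultimately show ?thesis unfolding CS' by blast
        qed
        have e: "ext (restrict k (I - {g})) = k"
        proof
          fix i show "ext (restrict k (I - {g})) i = k i"
            using k kk1 by (cases "i \<in> I") (auto simp: ext_def PiE_iff extensional_def)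
        qed
        have "c (ext (restrict k (I - {g}))) = \<one>\<^bsub>B g\<^esub>" using h1 kr by blast
        then show "c k = \<one>\<^bsub>B g\<^esub>" by (simp only: e)
      qed
    qed
    have "\<forall>k\<in>?K. \<forall>x\<in>carrier ?G. ?Fg (x \<otimes>\<^bsub>?G\<^esub> k) = ?Fg x"
      by (rule key[OF cG cB[OF g] _ Kmul hom0 Fgc dvg]) auto
    then have e: "?Fg (x \<otimes>\<^bsub>?G\<^esub> k) = ?Fg x" using x k by blast
    have xk: "x \<otimes>\<^bsub>?G\<^esub> k \<in> carrier ?G" by (rule monoid.m_closed[OF mG x k(1)])
    show ?thesis using e by (simp only: restrict_apply'[OF xk] restrict_apply'[OF x])
  qed
  define f where "f = (\<lambda>g\<in>I. \<lambda>a\<in>carrier (A g). F (sg I A g a) g)"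
  have fin: "F (sg I A i a) i \<in> carrier (B i)" if i: "i \<in> I" and a: "a \<in> carrier (A i)" for i a
    using Fx[OF sg_carrier[of I A, OF gA i a]] i by (auto simp: PiE_iff)
  have fm: "f \<in> (\<Pi>\<^sub>E i\<in>I. maps (A i) (B i))"
    using fin by (auto simp: f_def maps_def)
  have "F x = prod_map I A f x" for x
  proof (cases "x \<in> carrier ?G")
    case False then show ?thesis using F by (auto simp: maps_def prod_map_def)
  next
    case x: True
    have "F x g = F (sg I A g (x g)) g" if g: "g \<in> I" for g
    proof -
      define k where "k = (\<lambda>i\<in>I. if i = g then \<one>\<^bsub>A i\<^esub> else x i)"
      have xg: "x g \<in> carrier (A g)" using sum_comp[of I A, OF gA x g] .
      have xx1: "x \<in> (\<Pi>\<^sub>E i\<in>I. carrier (A i))" and xx2: "finite {i \<in> I. x i \<noteq> \<one>\<^bsub>A i\<^esub>}"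
        using x unfolding CS by blast+
      have k: "k \<in> carrier ?G"
      proof -
        have "{i \<in> I. k i \<noteq> \<one>\<^bsub>A i\<^esub>} \<subseteq> {i \<in> I. x i \<noteq> \<one>\<^bsub>A i\<^esub>}" by (auto simp: k_def)
        then have "finite {i \<in> I. k i \<noteq> \<one>\<^bsub>A i\<^esub>}" using xx2 finite_subset by blast
        moreover have "k \<in> (\<Pi>\<^sub>E i\<in>I. carrier (A i))"
        proof -
          have "k i \<in> carrier (A i)" if i: "i \<in> I" for i
            using xx1 i A1 by (auto simp: k_def PiE_iff)
          then show ?thesis by (auto simp: k_def)
        qed
        ultimately show ?thesis unfolding CS by blast
      qed
      have kg: "k g = \<one>\<^bsub>A g\<^esub>" using g by (simp add: k_def)
      have "sg I A g (x g) \<otimes>\<^bsub>?G\<^esub> k = x"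
        unfolding mult_sum_group
      proof
        fix i show "(\<lambda>i\<in>I. sg I A g (x g) i \<otimes>\<^bsub>A i\<^esub> k i) i = x i"
        proof (cases "i \<in> I")
          case False then show ?thesis using xx1 by (auto simp: PiE_iff extensional_def)
        next
          case i: True
          have xi: "x i \<in> carrier (A i)" using xx1 i by (auto simp: PiE_iff)
          show ?thesis
          proof (cases "i = g")
            case True then show ?thesis using i xi Ar by (simp add: sg_def k_def)
          next
            case False then show ?thesis using i xi Al by (simp add: sg_def k_def)
          qed
        qed
      qed
      then show ?thesis using invF[OF g sg_carrier[of I A, OF gA g xg] k kg] by simp
    qed
    then show ?thesis using x Fx[OF x] sum_comp[of I A, OF gA x]
      by (auto simp: prod_map_def f_def PiE_iff extensional_def)
  qed
  then show ?thesis using fm by blast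
qed



theorem theorem3:
  fixes \<Gamma> :: "'i set"
    and A :: "'i \<Rightarrow> ('a, 'c) monoid_scheme"
    and B :: "'i \<Rightarrow> ('b, 'd) monoid_scheme"
  assumes "\<Gamma> \<noteq> {}"
    and "\<And>\<gamma>. \<gamma> \<in> \<Gamma> \<Longrightarrow> comm_group (A \<gamma>)"
    and "\<And>\<gamma>. \<gamma> \<in> \<Gamma> \<Longrightarrow> comm_group (B \<gamma>)"
    and "\<And>\<gamma> h. \<gamma> \<in> \<Gamma> \<Longrightarrow> h \<in> hom (sum_group (\<Gamma> - {\<gamma>}) A) (B \<gamma>) \<Longrightarrow>
           (\<forall>x\<in>carrier (sum_group (\<Gamma> - {\<gamma>}) A). h x = \<one>\<^bsub>B \<gamma>\<^esub>)"
  shows "(\<forall>f \<in> (\<Pi>\<^sub>E \<gamma>\<in>\<Gamma>. maps (A \<gamma>) (B \<gamma>)).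
            fdeg (sum_group \<Gamma> A) (product_group \<Gamma> B) (prod_map \<Gamma> A f)
              = (SUP \<gamma>\<in>\<Gamma>. fdeg (A \<gamma>) (B \<gamma>) (f \<gamma>)))
       \<and> (\<forall>n. (n = -\<infinity> \<or> (\<exists>k::nat. n = ereal (real k))) \<longrightarrow>
            Fdeg (sum_group \<Gamma> A) (product_group \<Gamma> B) n
              = prod_map \<Gamma> A ` (\<Pi>\<^sub>E \<gamma>\<in>\<Gamma>. Fdeg (A \<gamma>) (B \<gamma>) n))
       \<and> Ffin (sum_group \<Gamma> A) (product_group \<Gamma> B)
              = (\<Union>k::nat. prod_map \<Gamma> A ` (\<Pi>\<^sub>E \<gamma>\<in>\<Gamma>. Fdeg (A \<gamma>) (B \<gamma>) (ereal (real k))))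
       \<and> (\<Union>k::nat. prod_map \<Gamma> A ` (\<Pi>\<^sub>E \<gamma>\<in>\<Gamma>. Fdeg (A \<gamma>) (B \<gamma>) (ereal (real k))))
              \<subseteq> prod_map \<Gamma> A ` (\<Pi>\<^sub>E \<gamma>\<in>\<Gamma>. Ffin (A \<gamma>) (B \<gamma>))"
proof -
  let ?G = "sum_group \<Gamma> A" and ?P = "product_group \<Gamma> B"
  have gA: "\<And>i. i \<in> \<Gamma> \<Longrightarrow> group (A i)" using assms(2) comm_group.axioms(2) by blast
  have gB: "\<And>i. i \<in> \<Gamma> \<Longrightarrow> group (B i)" using assms(3) comm_group.axioms(2) by blast
  have mG: "monoid ?G" using gA by (simp add: group.is_monoid)
  have gP: "group ?P" using gB by simp
  have a: "fdeg ?G ?P (prod_map \<Gamma> A f) = (SUP \<gamma>\<in>\<Gamma>. fdeg (A \<gamma>) (B \<gamma>) (f \<gamma>))"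
    if f: "f \<in> (\<Pi>\<^sub>E \<gamma>\<in>\<Gamma>. maps (A \<gamma>) (B \<gamma>))" for f
    by (rule fdeg_prod[of \<Gamma> A B f, OF gA gB f])
  have FdM: "Fdeg (A \<gamma>) (B \<gamma>) n \<subseteq> maps (A \<gamma>) (B \<gamma>)" for \<gamma> n
    unfolding Fdeg_def by blast
  have b: "Fdeg ?G ?P n = prod_map \<Gamma> A ` (\<Pi>\<^sub>E \<gamma>\<in>\<Gamma>. Fdeg (A \<gamma>) (B \<gamma>) n)"
    if n: "n = -\<infinity> \<or> (\<exists>k::nat. n = ereal (real k))" for n
  proof (intro equalityI subsetI)
    fix F assume F: "F \<in> Fdeg ?G ?P n"
    then have Fm: "F \<in> maps ?G ?P" and Fle: "fdeg ?G ?P F \<le> n" unfolding Fdeg_def by blast+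
    obtain m where dv: "diffs_vanish ?G ?P F m"
    proof (cases "\<forall>x\<in>carrier ?G. F x = \<one>\<^bsub>?P\<^esub>")
      case True
      then have "diffs_vanish ?G ?P F 0" by (rule zero_dv[OF mG gP])
      then show ?thesis by (rule that)
    next
      case False
      then have "fdeg ?G ?P F \<noteq> -\<infinity>" by (simp only: fdeg_bot) simp
      then have "n \<noteq> -\<infinity>" using Fle by (cases n) auto
      then obtain k :: nat where k: "n = ereal (real k)" using n by blast
      have "fdeg ?G ?P F \<le> ereal (real k)" using Fle k by simp
      then have "(\<forall>x\<in>carrier ?G. F x = \<one>\<^bsub>?P\<^esub>) \<or> diffs_vanish ?G ?P F k"
        by (simp only: fdeg_le_nat[OF mG gP])
      then have "diffs_vanish ?G ?P F k" using False by blast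
      then show ?thesis by (rule that)
    qed
    obtain f where f: "f \<in> (\<Pi>\<^sub>E i\<in>\<Gamma>. maps (A i) (B i))" and Ff: "F = prod_map \<Gamma> A f"
      using decompose[OF assms(2,3,4) Fm dv] by blast
    have "f \<in> (\<Pi>\<^sub>E \<gamma>\<in>\<Gamma>. Fdeg (A \<gamma>) (B \<gamma>) n)"
    proof -
      have "f \<gamma> \<in> Fdeg (A \<gamma>) (B \<gamma>) n" if g: "\<gamma> \<in> \<Gamma>" for \<gamma>
      proof -
        have "fdeg (A \<gamma>) (B \<gamma>) (f \<gamma>) \<le> (SUP \<gamma>\<in>\<Gamma>. fdeg (A \<gamma>) (B \<gamma>) (f \<gamma>))" using g by (rule SUP_upper)
        also have "\<dots> = fdeg ?G ?P F" using a[OF f] Ff by simp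
        also have "\<dots> \<le> n" by (rule Fle)
        finally have "fdeg (A \<gamma>) (B \<gamma>) (f \<gamma>) \<le> n" .
        moreover have "f \<gamma> \<in> maps (A \<gamma>) (B \<gamma>)" using f g by (rule PiE_mem)
        ultimately show ?thesis unfolding Fdeg_def by blast
      qed
      moreover have "f \<in> extensional \<Gamma>" using PiE_iff[THEN iffD1, OF f] by (rule conjunct2)
      ultimately show ?thesis by (simp add: PiE_iff)
    qed
    then show "F \<in> prod_map \<Gamma> A ` (\<Pi>\<^sub>E \<gamma>\<in>\<Gamma>. Fdeg (A \<gamma>) (B \<gamma>) n)" unfolding Ff by (rule imageI)
  next
    fix F assume "F \<in> prod_map \<Gamma> A ` (\<Pi>\<^sub>E \<gamma>\<in>\<Gamma>. Fdeg (A \<gamma>) (B \<gamma>) n)"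
    then obtain f where f: "f \<in> (\<Pi>\<^sub>E \<gamma>\<in>\<Gamma>. Fdeg (A \<gamma>) (B \<gamma>) n)" and Ff: "F = prod_map \<Gamma> A f" by blast
    have sub: "(\<Pi>\<^sub>E \<gamma>\<in>\<Gamma>. Fdeg (A \<gamma>) (B \<gamma>) n) \<subseteq> (\<Pi>\<^sub>E \<gamma>\<in>\<Gamma>. maps (A \<gamma>) (B \<gamma>))"
      by (rule PiE_mono) (rule FdM)
    have fm: "f \<in> (\<Pi>\<^sub>E \<gamma>\<in>\<Gamma>. maps (A \<gamma>) (B \<gamma>))" using f sub by (rule subsetD[rotated])
    have "fdeg ?G ?P F = (SUP \<gamma>\<in>\<Gamma>. fdeg (A \<gamma>) (B \<gamma>) (f \<gamma>))" using a[OF fm] Ff by simp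
    also have "\<dots> \<le> n"
    proof (rule SUP_least)
      fix \<gamma> assume "\<gamma> \<in> \<Gamma>"
      then have "f \<gamma> \<in> Fdeg (A \<gamma>) (B \<gamma>) n" using f by (rule PiE_mem[rotated])
      then show "fdeg (A \<gamma>) (B \<gamma>) (f \<gamma>) \<le> n" unfolding Fdeg_def by blast
    qed
    finally show "F \<in> Fdeg ?G ?P n"
      using prod_map_maps[of \<Gamma> A f B, OF gA fm] Ff by (simp add: Fdeg_def)
  qed
  have c: "Ffin ?G ?P = (\<Union>k::nat. prod_map \<Gamma> A ` (\<Pi>\<^sub>E \<gamma>\<in>\<Gamma>. Fdeg (A \<gamma>) (B \<gamma>) (ereal (real k))))"
  proof -
    have bk: "Fdeg ?G ?P (ereal (real k)) = prod_map \<Gamma> A ` (\<Pi>\<^sub>E \<gamma>\<in>\<Gamma>. Fdeg (A \<gamma>) (B \<gamma>) (ereal (real k)))" for k :: nat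
      by (rule b) blast
    show ?thesis unfolding Ffin_def bk ..
  qed
  have d: "(\<Union>k::nat. prod_map \<Gamma> A ` (\<Pi>\<^sub>E \<gamma>\<in>\<Gamma>. Fdeg (A \<gamma>) (B \<gamma>) (ereal (real k))))
              \<subseteq> prod_map \<Gamma> A ` (\<Pi>\<^sub>E \<gamma>\<in>\<Gamma>. Ffin (A \<gamma>) (B \<gamma>))"
  proof (rule UN_least)
    fix k :: nat
    have "(\<Pi>\<^sub>E \<gamma>\<in>\<Gamma>. Fdeg (A \<gamma>) (B \<gamma>) (ereal (real k))) \<subseteq> (\<Pi>\<^sub>E \<gamma>\<in>\<Gamma>. Ffin (A \<gamma>) (B \<gamma>))"
      by (rule PiE_mono) (unfold Ffin_def, rule UN_upper, rule UNIV_I)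
    then show "prod_map \<Gamma> A ` (\<Pi>\<^sub>E \<gamma>\<in>\<Gamma>. Fdeg (A \<gamma>) (B \<gamma>) (ereal (real k))) \<subseteq> prod_map \<Gamma> A ` (\<Pi>\<^sub>E \<gamma>\<in>\<Gamma>. Ffin (A \<gamma>) (B \<gamma>))"
      by (rule image_mono)
  qed
  have a': "\<forall>f \<in> (\<Pi>\<^sub>E \<gamma>\<in>\<Gamma>. maps (A \<gamma>) (B \<gamma>)).
            fdeg ?G ?P (prod_map \<Gamma> A f) = (SUP \<gamma>\<in>\<Gamma>. fdeg (A \<gamma>) (B \<gamma>) (f \<gamma>))"
    using a by (rule ballI)
  have b': "\<forall>n. (n = -\<infinity> \<or> (\<exists>k::nat. n = ereal (real k))) \<longrightarrow>
            Fdeg ?G ?P n = prod_map \<Gamma> A ` (\<Pi>\<^sub>E \<gamma>\<in>\<Gamma>. Fdeg (A \<gamma>) (B \<gamma>) n)"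
    using b by (intro allI impI)
  show ?thesis using a' b' c d by (intro conjI)
qed


end
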